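(* Consider any run of Algorithm 1 (described in the context) under the standing assumption. Then: (i) if $k\in\mathcal{B}\cap\mathcal{S}$, then $f_k-f_{k+1}\ge\tfrac{\eta}{2}\epsilon_H\delta_k^2$; (ii) if $k\in\mathcal{I}\cap\mathcal{S}$, then \[ f_k-f_{k+1}\ \ge\ \tfrac{\eta}{2(1+2L_H)}\min\big\{\|g_{k+1}\|^2\epsilon_H^{-1},\ \epsilon_H^3\big\}. \]
   Context: Let $f:\mathbb{R}^n\to\mathbb{R}$ with gradient $g=\nabla f$ and Hessian $H=\nabla^2 f$; $\|\cdot\|$ is the Euclidean norm and $\lambda_{\min}(\cdot)$ the smallest eigenvalue of a symmetric matrix. Write $f_k=f(x_k)$, $g_k=g(x_k)$, $H_k=H(x_k)$ and $m_k(x):=f_k+g_k^T(x-x_k)+\tfrac12(x-x_k)^TH_k(x-x_k)$. Algorithm 1 (exact trust-region Newton method). Inputs: tolerances $\epsilon_g,\epsilon_H>0$; parameters $\gamma_1\in(0,1)$, $\gamma_2\in[1,\infty)$, $\psi\in(1/\gamma_2,1]$; $x_0\in\mathbb{R}^n$; $\delta_0>0$; $\delta_{\max}\ge\delta_0$; $\eta\in(0,1)$. For $k=0,1,2,\dots$: evaluate $g_k,H_k$; if $\|g_k\|\le\epsilon_g$, compute $\lambda_k=\lambda_{\min}(H_k)$ and, if $\lambda_k\ge-\epsilon_H$, return $x_k$ (terminate). Otherwise compute $s_k$ as a global solution of $\min_{s}\ m_k(x_k+s)+\tfrac12\epsilon_H\|s\|^2$ subject to $\|s\|\le\delta_k$.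 Set $\rho_k=\frac{f_k-f(x_k+s_k)}{m_k(x_k)-m_k(x_k+s_k)}$. If $\rho_k\ge\eta$: $x_{k+1}=x_k+s_k$, and $\delta_{k+1}=\min\{\gamma_2\delta_k,\delta_{\max}\}$ if $\|s_k\|\ge\psi\delta_k$, else $\delta_{k+1}=\delta_k$. If $\rho_k<\eta$: $x_{k+1}=x_k$ and $\delta_{k+1}=\gamma_1\|s_k\|$. $\mathcal{K}$ is the set of indices $k$ such that iteration $k$ is completed without termination; $\mathcal{S}=\{k\in\mathcal{K}:\rho_k\ge\eta\}$, $\mathcal{I}=\{k\in\mathcal{K}:\|s_k\|<\delta_k\}$, $\mathcal{B}=\{k\in\mathcal{K}:\|s_k\|=\delta_k\}$. Standing assumption: the sequence $\{f_k\}$ is bounded below by some $f_{\rm low}\in\mathbb{R}$, and all segments $[x_k,x_k+s_k]$ lie in an open set on which $f$ is twice continuously differentiable with gradient Lipschitz continuous with constant $L_g>0$ and Hessian Lipschitz continuous with constant $L_H>0$. *)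

theory Defs
  imports "HOL-Analysis.Analysis"
begin

definition lambda_min :: "real^'n^'n \<Rightarrow> real" where
  "lambda_min A = Min {l. \<exists>v::real^'n. v \<noteq> 0 \<and> A *v v = l *\<^sub>R v}"

definition tr_model ::
  "(real^'n \<Rightarrow> real) \<Rightarrow> (real^'n \<Rightarrow> real^'n) \<Rightarrow> (real^'n \<Rightarrow> real^'n^'n)
    \<Rightarrow> real^'n \<Rightarrow> real^'n \<Rightarrow> real" where
  "tr_model f g H xk x =
     f xk + g xk \<bullet> (x - xk) + 1/2 * ((x - xk) \<bullet> (H xk *v (x - xk)))"

definition tr_stop ::
  "(real^'n \<Rightarrow> real^'n) \<Rightarrow> (real^'n \<Rightarrow> real^'n^'n) \<Rightarrow> real \<Rightarrow> real \<Rightarrow> real^'n \<Rightarrow> bool" where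
  "tr_stop g H eps_g eps_H y \<longleftrightarrow> norm (g y) \<le> eps_g \<and> lambda_min (H y) \<ge> - eps_H"

definition tr_K ::
  "(real^'n \<Rightarrow> real^'n) \<Rightarrow> (real^'n \<Rightarrow> real^'n^'n) \<Rightarrow> real \<Rightarrow> real \<Rightarrow> (nat \<Rightarrow> real^'n) \<Rightarrow> nat set" where
  "tr_K g H eps_g eps_H x = {k. \<forall>j\<le>k. \<not> tr_stop g H eps_g eps_H (x j)}"

definition tr_rho ::
  "(real^'n \<Rightarrow> real) \<Rightarrow> (real^'n \<Rightarrow> real^'n) \<Rightarrow> (real^'n \<Rightarrow> real^'n^'n)
    \<Rightarrow> real^'n \<Rightarrow> real^'n \<Rightarrow> real" where
  "tr_rho f g H xk sk =
     (f xk - f (xk + sk)) / (tr_model f g H xk xk - tr_model f g H xk (xk + sk))"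

end

theory Submission
  imports Defs "HOL-Analysis.Analysis"
begin

lemma onorm_mv: "norm ((A::real^'n^'m) *v v) \<le> onorm (\<lambda>v. A *v v) * norm v"
  using onorm[OF matrix_vector_mul_bounded_linear[of A]] by simp

lemma eps_lemma:
  fixes d K t0 :: real
  assumes "t0 > 0" "\<And>t. 0 < t \<Longrightarrow> t < t0 \<Longrightarrow> d \<le> K * t"
  shows "d \<le> 0"
proof (rule ccontr)
  assume d: "\<not> d \<le> 0"
  show False
  proof (cases "K \<le> 0")
    case True
    have "d \<le> K * (t0/2)" using assms(2)[of "t0/2"] assms(1) by simp
    moreover have "K * (t0/2) \<le> 0" using True assms(1) by (simp add: mult_nonpos_nonneg)
    ultimately show False using d by simp
  next
    case False
    define t where "t = min (t0/2) (d/(2*K))"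
    have t0: "0 < t" "t < t0" using False d assms(1) by (auto simp: t_def)
    have "t \<le> d/(2*K)" by (simp add: t_def)
    then have "K * t \<le> K * (d/(2*K))" using False by (intro mult_left_mono) auto
    also have "\<dots> = d/2" using False by simp
    finally show False using assms(2)[OF t0] d by simp
  qed
qed

lemma line_deriv:
  fixes f :: "real^'n \<Rightarrow> real" and g :: "real^'n \<Rightarrow> real^'n"
  assumes "y + a *\<^sub>R u + w \<in> U"
    and f_deriv: "\<And>y. y \<in> U \<Longrightarrow> (f has_derivative (\<lambda>h. g y \<bullet> h)) (at y)"
  shows "((\<lambda>a. f (y + a *\<^sub>R u + w)) has_real_derivative (g (y + a *\<^sub>R u + w) \<bullet> u)) (at a)"
proof -
  have l: "((\<lambda>a. y + a *\<^sub>R u + w) has_derivative (\<lambda>h. h *\<^sub>R u)) (at a)"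
    by (auto intro!: derivative_eq_intros)
  have "((\<lambda>a. f (y + a *\<^sub>R u + w)) has_derivative (\<lambda>h. g (y + a *\<^sub>R u + w) \<bullet> (h *\<^sub>R u))) (at a)"
    using has_derivative_compose[OF l f_deriv[OF assms(1)]] by (simp add: o_def)
  moreover have "(\<lambda>h. g (y + a *\<^sub>R u + w) \<bullet> (h *\<^sub>R u)) = (\<lambda>h. (g (y + a *\<^sub>R u + w) \<bullet> u) * h)"
    by (auto simp: mult.commute)
  ultimately show ?thesis unfolding has_field_derivative_def by simp
qed

lemma taylor_g:
  fixes g :: "real^'n \<Rightarrow> real^'n" and H :: "real^'n \<Rightarrow> real^'n^'n"
  assumes seg: "closed_segment a b \<subseteq> U"
    and g_deriv: "\<And>y. y \<in> U \<Longrightarrow> (g has_derivative (\<lambda>h. H y *v h)) (at y)"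
    and H_lip: "\<And>y z. y \<in> U \<Longrightarrow> z \<in> U \<Longrightarrow>
        onorm (\<lambda>v. (H y - H z) *v v) \<le> L * norm (y - z)"
    and L: "L \<ge> 0"
  shows "norm (g b - g a - H a *v (b - a)) \<le> L * (norm (b - a))\<^sup>2"
proof -
  have "norm (g b - g a - (\<lambda>h. H a *v h) (b - a)) \<le> norm (b - a) * (L * norm (b - a))"
  proof (rule differentiable_bound_linearization[where S="closed_segment a b" and f'="\<lambda>y h. H y *v h"])
    fix t :: real assume "t \<in> {0..1}"
    then show "a + t *\<^sub>R (b - a) \<in> closed_segment a b"
      unfolding closed_segment_def by (auto intro!: exI[of _ t] simp: algebra_simps)
  next
    fix y assume "y \<in> closed_segment a b"
    then show "(g has_derivative (\<lambda>h. H y *v h)) (at y within closed_segment a b)"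
      using g_deriv seg has_derivative_at_withinI by blast
  next
    fix y assume y: "y \<in> closed_segment a b"
    have "(\<lambda>h. H y *v h) - (\<lambda>h. H a *v h) = (\<lambda>v. (H y - H a) *v v)"
      by (auto simp: matrix_vector_mult_diff_rdistrib)
    moreover have "onorm (\<lambda>v. (H y - H a) *v v) \<le> L * norm (y - a)"
      using H_lip y seg by auto
    moreover have "norm (y - a) \<le> norm (b - a)"
      using y by (metis dist_commute dist_norm dist_in_closed_segment)
    ultimately show "onorm ((\<lambda>h. H y *v h) - (\<lambda>h. H a *v h)) \<le> L * norm (b - a)"
      using L by (metis mult_left_mono order_trans)
  next
    show "a \<in> closed_segment a b" by simp
  qed
  then show ?thesis by (simp add: power2_eq_square mult_ac)
qed

lemma delta_bound:
  fixes f :: "real^'n \<Rightarrow> real" and g :: "real^'n \<Rightarrow> real^'n" and H :: "real^'n \<Rightarrow> real^'n^'n"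
  assumes ball: "ball y r \<subseteq> U" and t: "0 < t" "t * (norm u + norm v) < r"
    and f_deriv: "\<And>y. y \<in> U \<Longrightarrow> (f has_derivative (\<lambda>h. g y \<bullet> h)) (at y)"
    and g_deriv: "\<And>y. y \<in> U \<Longrightarrow> (g has_derivative (\<lambda>h. H y *v h)) (at y)"
    and H_lip: "\<And>y z. y \<in> U \<Longrightarrow> z \<in> U \<Longrightarrow>
        onorm (\<lambda>v. (H y - H z) *v v) \<le> L * norm (y - z)"
    and L: "L \<ge> 0"
  shows "\<bar>f (y + t *\<^sub>R u + t *\<^sub>R v) - f (y + t *\<^sub>R u) - f (y + t *\<^sub>R v) + f y
           - t\<^sup>2 * (u \<bullet> (H y *v v))\<bar>
         \<le> t^3 * (L * norm u * ((norm v)\<^sup>2 + norm u * norm v))"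
proof -
  have "0 \<le> t * (norm u + norm v)" using t by simp
  then have "r > 0" using t by linarith
  then have yU: "y \<in> U" using ball by auto
  define c where "c = u \<bullet> (H y *v v)"
  define K where "K = L * ((norm v)\<^sup>2 + norm u * norm v)"
  define psi where "psi a = f (y + a *\<^sub>R u + t *\<^sub>R v) - f (y + a *\<^sub>R u + 0) - a * t * c" for a
  have inb1: "y + a *\<^sub>R u + t *\<^sub>R v \<in> U" if "0 \<le> a" "a \<le> t" for a
  proof -
    have "norm (a *\<^sub>R u + t *\<^sub>R v) \<le> a * norm u + t * norm v"
      using norm_triangle_ineq[of "a *\<^sub>R u" "t *\<^sub>R v"] that t by simp
    also have "\<dots> \<le> t * (norm u + norm v)"
      using that by (simp add: distrib_left mult_right_mono)
    finally have "dist y (y + a *\<^sub>R u + t *\<^sub>R v) < r" using t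
      by (subst dist_commute) (simp add: dist_norm)
    then show ?thesis using ball by auto
  qed
  have inb2: "y + a *\<^sub>R u + 0 \<in> U" if "0 \<le> a" "a \<le> t" for a
  proof -
    have "norm (a *\<^sub>R u) \<le> t * (norm u + norm v)"
      using that by (simp add: distrib_left mult_right_mono add_increasing2)
    then have "dist y (y + a *\<^sub>R u + 0) < r" using t
      by (subst dist_commute) (simp add: dist_norm)
    then show ?thesis using ball by auto
  qed
  have der: "(psi has_real_derivative
       (g (y + a *\<^sub>R u + t *\<^sub>R v) \<bullet> u - g (y + a *\<^sub>R u + 0) \<bullet> u - t * c)) (at a)"
    if "0 \<le> a" "a \<le> t" for a
  proof -
    have d1: "((\<lambda>a. f (y + a *\<^sub>R u + t *\<^sub>R v)) has_real_derivative g (y + a *\<^sub>R u + t *\<^sub>R v) \<bullet> u) (at a)"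
      using line_deriv[OF inb1[OF that] f_deriv] .
    have d2: "((\<lambda>a. f (y + a *\<^sub>R u + 0)) has_real_derivative g (y + a *\<^sub>R u + 0) \<bullet> u) (at a)"
      using line_deriv[OF inb2[OF that] f_deriv] .
    have d3: "((\<lambda>a. a * t * c) has_real_derivative t * c) (at a)"
      by (auto intro!: derivative_eq_intros)
    show ?thesis using DERIV_diff[OF DERIV_diff[OF d1 d2] d3] unfolding psi_def .
  qed
  obtain z where z: "0 < z" "z < t"
    and mvt: "psi t - psi 0 = (t - 0) * (g (y + z *\<^sub>R u + t *\<^sub>R v) \<bullet> u - g (y + z *\<^sub>R u + 0) \<bullet> u - t * c)"
    using MVT2[OF t(1) der] by blast
  define p where "p = y + z *\<^sub>R u"
  have pU: "p \<in> U" using inb2[of z] z by (simp add: p_def)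
  have seg: "closed_segment p (p + t *\<^sub>R v) \<subseteq> U"
  proof -
    have "p \<in> ball y r" "p + t *\<^sub>R v \<in> ball y r"
    proof -
      have "norm (z *\<^sub>R u) \<le> t * (norm u + norm v)"
        using z by (simp add: distrib_left mult_right_mono add_increasing2)
      then show "p \<in> ball y r" using t unfolding mem_ball p_def by (subst dist_commute) (simp add: dist_norm)
      have "norm (z *\<^sub>R u + t *\<^sub>R v) \<le> z * norm u + t * norm v"
        using norm_triangle_ineq[of "z *\<^sub>R u" "t *\<^sub>R v"] z t by simp
      also have "\<dots> \<le> t * (norm u + norm v)"
        using z by (simp add: distrib_left mult_right_mono)
      finally show "p + t *\<^sub>R v \<in> ball y r" using t unfolding mem_ball p_def by (subst dist_commute) (simp add: dist_norm add.assoc)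
    qed
    then show ?thesis using ball closed_segment_subset[OF _ _ convex_ball] by blast
  qed
  have tay: "norm (g (p + t *\<^sub>R v) - g p - H p *v (t *\<^sub>R v)) \<le> L * (norm (t *\<^sub>R v))\<^sup>2"
    using taylor_g[OF seg g_deriv H_lip L] by simp
  have hl: "norm ((H p - H y) *v (t *\<^sub>R v)) \<le> L * (z * norm u) * (t * norm v)"
  proof -
    have "norm ((H p - H y) *v (t *\<^sub>R v)) \<le> onorm (\<lambda>w. (H p - H y) *v w) * norm (t *\<^sub>R v)"
      by (rule onorm_mv)
    also have "\<dots> \<le> L * norm (p - y) * norm (t *\<^sub>R v)"
      using H_lip[OF pU yU] by (intro mult_right_mono) auto
    also have "\<dots> = L * (z * norm u) * (t * norm v)" using z t by (simp add: p_def)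
    finally show ?thesis .
  qed
  have eqv: "g (p + t *\<^sub>R v) - g p - t *\<^sub>R (H y *v v) =
        (g (p + t *\<^sub>R v) - g p - H p *v (t *\<^sub>R v)) + (H p - H y) *v (t *\<^sub>R v)"
    by (simp add: matrix_vector_mult_diff_rdistrib matrix_vector_mult_scaleR scaleR_diff_right algebra_simps)
  have "norm (g (p + t *\<^sub>R v) - g p - t *\<^sub>R (H y *v v)) \<le>
        L * (norm (t *\<^sub>R v))\<^sup>2 + L * (z * norm u) * (t * norm v)"
    unfolding eqv by (rule order_trans[OF norm_triangle_ineq add_mono[OF tay hl]])
  also have "\<dots> \<le> t\<^sup>2 * K"
  proof -
    have "L * (z * norm u) * (t * norm v) \<le> L * (t * norm u) * (t * norm v)"
      using z L t by (intro mult_right_mono mult_left_mono) auto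
    then show ?thesis using t by (simp add: K_def power2_eq_square algebra_simps)
  qed
  finally have nb: "norm (g (p + t *\<^sub>R v) - g p - t *\<^sub>R (H y *v v)) \<le> t\<^sup>2 * K" .
  have "\<bar>g (p + t *\<^sub>R v) \<bullet> u - g p \<bullet> u - t * c\<bar> = \<bar>u \<bullet> (g (p + t *\<^sub>R v) - g p - t *\<^sub>R (H y *v v))\<bar>"
    by (simp add: c_def inner_diff_right inner_commute)
  also have "\<dots> \<le> norm u * (t\<^sup>2 * K)"
    using order_trans[OF Cauchy_Schwarz_ineq2 mult_left_mono[OF nb norm_ge_zero]] .
  finally have db: "\<bar>g (p + t *\<^sub>R v) \<bullet> u - g p \<bullet> u - t * c\<bar> \<le> norm u * (t\<^sup>2 * K)" .
  have "psi t - psi 0 = f (y + t *\<^sub>R u + t *\<^sub>R v) - f (y + t *\<^sub>R u) - f (y + t *\<^sub>R v) + f y - t\<^sup>2 * c"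
    by (simp add: psi_def power2_eq_square add.commute)
  with mvt have "\<bar>f (y + t *\<^sub>R u + t *\<^sub>R v) - f (y + t *\<^sub>R u) - f (y + t *\<^sub>R v) + f y - t\<^sup>2 * c\<bar>
     = t * \<bar>g (p + t *\<^sub>R v) \<bullet> u - g p \<bullet> u - t * c\<bar>"
    using t by (simp add: p_def abs_mult)
  also have "\<dots> \<le> t * (norm u * (t\<^sup>2 * K))" using db t by simp
  also have "\<dots> = t^3 * (L * norm u * ((norm v)\<^sup>2 + norm u * norm v))"
    by (simp add: K_def power2_eq_square power3_eq_cube algebra_simps)
  finally show ?thesis by (simp add: c_def)
qed


lemma hess_sym:
  fixes f :: "real^'n \<Rightarrow> real" and g :: "real^'n \<Rightarrow> real^'n" and H :: "real^'n \<Rightarrow> real^'n^'n"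
  assumes U: "open U" "y \<in> U"
    and f_deriv: "\<And>y. y \<in> U \<Longrightarrow> (f has_derivative (\<lambda>h. g y \<bullet> h)) (at y)"
    and g_deriv: "\<And>y. y \<in> U \<Longrightarrow> (g has_derivative (\<lambda>h. H y *v h)) (at y)"
    and H_lip: "\<And>y z. y \<in> U \<Longrightarrow> z \<in> U \<Longrightarrow>
        onorm (\<lambda>v. (H y - H z) *v v) \<le> L * norm (y - z)"
    and L: "L \<ge> 0"
  shows "u \<bullet> (H y *v v) = v \<bullet> (H y *v u)"
proof -
  obtain r where r: "r > 0" "ball y r \<subseteq> U" using openE[OF U] by blast
  define c1 where "c1 = u \<bullet> (H y *v v)"
  define c2 where "c2 = v \<bullet> (H y *v u)"
  define K1 where "K1 = L * norm u * ((norm v)\<^sup>2 + norm u * norm v)"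
  define K2 where "K2 = L * norm v * ((norm u)\<^sup>2 + norm v * norm u)"
  define t0 where "t0 = r / (norm u + norm v + 1)"
  have npos: "norm u + norm v + 1 > 0" using norm_ge_zero[of u] norm_ge_zero[of v] by linarith
  have t0: "t0 > 0" using r npos by (simp add: t0_def)
  have "\<bar>c1 - c2\<bar> \<le> 0"
  proof (rule eps_lemma[OF t0])
    fix t :: real assume t: "0 < t" "t < t0"
    have "t * (norm u + norm v) \<le> t * (norm u + norm v + 1)" using t by simp
    also have "\<dots> < t0 * (norm u + norm v + 1)" using t npos by simp
    also have "\<dots> = r" using npos by (simp add: t0_def)
    finally have tr: "t * (norm u + norm v) < r" .
    then have tr': "t * (norm v + norm u) < r" by (simp add: add.commute)
    have A: "\<bar>f (y + t *\<^sub>R u + t *\<^sub>R v) - f (y + t *\<^sub>R u) - f (y + t *\<^sub>R v) + f y - t\<^sup>2 * c1\<bar> \<le> t^3 * K1"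
      using delta_bound[OF r(2) t(1) tr f_deriv g_deriv H_lip L] by (simp add: c1_def K1_def)
    have B: "\<bar>f (y + t *\<^sub>R v + t *\<^sub>R u) - f (y + t *\<^sub>R v) - f (y + t *\<^sub>R u) + f y - t\<^sup>2 * c2\<bar> \<le> t^3 * K2"
      using delta_bound[OF r(2) t(1) tr' f_deriv g_deriv H_lip L] by (simp add: c2_def K2_def)
    have e: "y + t *\<^sub>R v + t *\<^sub>R u = y + t *\<^sub>R u + t *\<^sub>R v" by (simp add: algebra_simps)
    have "\<bar>t\<^sup>2 * c1 - t\<^sup>2 * c2\<bar> \<le> t^3 * K1 + t^3 * K2" using A B unfolding e by linarith
    moreover have "t\<^sup>2 * \<bar>c1 - c2\<bar> = \<bar>t\<^sup>2 * c1 - t\<^sup>2 * c2\<bar>"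
      by (metis abs_mult right_diff_distrib abs_of_nonneg zero_le_power2)
    moreover have "t^3 * K1 + t^3 * K2 = t\<^sup>2 * ((K1 + K2) * t)"
      by (simp add: power2_eq_square power3_eq_cube algebra_simps)
    ultimately have "t\<^sup>2 * \<bar>c1 - c2\<bar> \<le> t\<^sup>2 * ((K1 + K2) * t)" by simp
    then show "\<bar>c1 - c2\<bar> \<le> (K1 + K2) * t" using t by (simp add: mult_le_cancel_left)
  qed
  then show ?thesis by (simp add: c1_def c2_def)
qed

lemma stationary:
  fixes A :: "real^'n^'n" and gk s :: "real^'n"
  assumes sym: "\<And>u v. u \<bullet> (A *v v) = v \<bullet> (A *v u)"
    and sd: "norm s < dl"
    and opt: "\<And>t. norm t \<le> dl \<Longrightarrow> gk \<bullet> s + 1/2 * (s \<bullet> (A *v s)) + 1/2 * eps * (norm s)\<^sup>2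
                 \<le> gk \<bullet> t + 1/2 * (t \<bullet> (A *v t)) + 1/2 * eps * (norm t)\<^sup>2"
  shows "gk + A *v s + eps *\<^sub>R s = 0"
proof -
  define G where "G = gk + A *v s + eps *\<^sub>R s"
  define w where "w = - G"
  define D where "D = w \<bullet> (A *v w) + eps * (norm w)\<^sup>2"
  define t0 where "t0 = (dl - norm s) / (norm w + 1)"
  have npos: "norm w + 1 > 0" using norm_ge_zero[of w] by linarith
  have t0: "t0 > 0" using sd npos by (simp add: t0_def)
  have "(norm G)\<^sup>2 \<le> 0"
  proof (rule eps_lemma[OF t0])
    fix tau :: real assume tau: "0 < tau" "tau < t0"
    have "norm (s + tau *\<^sub>R w) \<le> norm s + tau * norm w"
      using norm_triangle_ineq[of s "tau *\<^sub>R w"] tau by simp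
    also have "tau * norm w \<le> tau * (norm w + 1)" using tau by simp
    then have "norm s + tau * norm w \<le> norm s + t0 * (norm w + 1)"
      using tau npos by (smt (verit) mult_right_mono)
    also have "\<dots> = dl" using npos by (simp add: t0_def)
    finally have feas: "norm (s + tau *\<^sub>R w) \<le> dl" .
    have e1: "(s + tau *\<^sub>R w) \<bullet> (A *v (s + tau *\<^sub>R w)) = s \<bullet> (A *v s) + 2 * tau * (w \<bullet> (A *v s)) + tau\<^sup>2 * (w \<bullet> (A *v w))"
      using sym[of s w]
      by (simp add: matrix_vector_right_distrib matrix_vector_mult_scaleR inner_add_left inner_add_right power2_eq_square algebra_simps)
    have e2: "(norm (s + tau *\<^sub>R w))\<^sup>2 = (norm s)\<^sup>2 + 2 * tau * (s \<bullet> w) + tau\<^sup>2 * (norm w)\<^sup>2"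
      unfolding power2_norm_eq_inner
      by (simp add: inner_add_left inner_add_right power2_eq_square algebra_simps inner_commute)
    have e3: "gk \<bullet> (s + tau *\<^sub>R w) = gk \<bullet> s + tau * (gk \<bullet> w)" by (simp add: inner_add_right)
    have Gw: "G \<bullet> w = gk \<bullet> w + w \<bullet> (A *v s) + eps * (s \<bullet> w)"
      unfolding G_def inner_add_left inner_scaleR_left
      by (simp add: inner_commute[of "A *v s" w] inner_commute[of s w])
    have "0 \<le> tau * (G \<bullet> w) + tau\<^sup>2 / 2 * D"
      using opt[OF feas] unfolding e1 e2 e3 Gw D_def by (simp add: algebra_simps)
    moreover have "G \<bullet> w = - (norm G)\<^sup>2" by (simp add: w_def power2_norm_eq_inner)
    ultimately have "tau * (norm G)\<^sup>2 \<le> tau * (D / 2 * tau)" by (simp add: power2_eq_square algebra_simps)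
    then show "(norm G)\<^sup>2 \<le> D / 2 * tau" using tau by (simp add: mult_le_cancel_left)
  qed
  then show ?thesis by (simp add: G_def)
qed

lemma final_ineq:
  fixes eps L sig G :: real
  assumes "eps > 0" "L > 0" "sig \<ge> 0" "G \<ge> 0" "G \<le> L * sig\<^sup>2 + eps * sig"
  shows "min (G\<^sup>2 / eps) (eps ^ 3) \<le> (1 + 2 * L) * eps * sig\<^sup>2"
proof (cases "(1 + 2 * L) * sig\<^sup>2 \<ge> eps\<^sup>2")
  case True
  have "eps ^ 3 = eps * eps\<^sup>2" by (simp add: power2_eq_square power3_eq_cube)
  also have "\<dots> \<le> eps * ((1 + 2 * L) * sig\<^sup>2)" using True assms(1) by simp
  finally show ?thesis by (simp add: algebra_simps min_le_iff_disj)
next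
  case False
  then have f: "(1 + 2 * L) * sig\<^sup>2 < eps\<^sup>2" by simp
  have "sig\<^sup>2 \<le> (1 + 2 * L) * sig\<^sup>2" using assms(2) by (simp add: mult_le_cancel_right1)
  then have "sig\<^sup>2 < eps\<^sup>2" using f by linarith
  then have se: "sig < eps" using assms by (smt (verit) power_mono)
  have "L * sig\<^sup>2 + 2 * sig * eps \<le> 2 * eps\<^sup>2"
  proof -
    have "2 * (L * sig\<^sup>2) < eps\<^sup>2 - sig\<^sup>2" using f by (simp add: algebra_simps)
    moreover have "0 \<le> (3 * eps - sig) * (eps - sig)" using se assms by simp
    ultimately show ?thesis by (simp add: power2_eq_square algebra_simps)
  qed
  then have "(L * sig + eps)\<^sup>2 \<le> eps\<^sup>2 * (1 + 2 * L)"
  proof -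
    assume h: "L * sig\<^sup>2 + 2 * sig * eps \<le> 2 * eps\<^sup>2"
    have "(L * sig + eps)\<^sup>2 = L * (L * sig\<^sup>2 + 2 * sig * eps) + eps\<^sup>2"
      by (simp add: power2_eq_square algebra_simps)
    also have "\<dots> \<le> L * (2 * eps\<^sup>2) + eps\<^sup>2" using h assms(2) by simp
    finally show ?thesis by (simp add: algebra_simps)
  qed
  moreover have "G\<^sup>2 \<le> sig\<^sup>2 * (L * sig + eps)\<^sup>2"
  proof -
    have "G \<le> sig * (L * sig + eps)" using assms(5) by (simp add: power2_eq_square algebra_simps)
    then have "G\<^sup>2 \<le> (sig * (L * sig + eps))\<^sup>2" using assms(4) by (rule power_mono)
    then show ?thesis by (simp add: power_mult_distrib)
  qed
  ultimately have "G\<^sup>2 \<le> sig\<^sup>2 * (eps\<^sup>2 * (1 + 2 * L))"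
    by (meson mult_left_mono order_trans zero_le_power2)
  then have "G\<^sup>2 / eps \<le> (1 + 2 * L) * eps * sig\<^sup>2"
    using assms(1) by (simp add: divide_le_eq power2_eq_square algebra_simps)
  then show ?thesis by (simp add: min_le_iff_disj)
qed

theorem lemma2p3:
  fixes f :: "real^'n \<Rightarrow> real"
    and g :: "real^'n \<Rightarrow> real^'n"
    and H :: "real^'n \<Rightarrow> real^'n^'n"
    and eps_g eps_H gamma1 gamma2 psi delta0 delta_max eta f_low L_g L_H :: real
    and x s :: "nat \<Rightarrow> real^'n"
    and delta :: "nat \<Rightarrow> real"
    and U :: "(real^'n) set"
    and k :: nat
  defines "K \<equiv> tr_K g H eps_g eps_H x"
  defines "S \<equiv> {k\<in>K. tr_rho f g H (x k) (s k) \<ge> eta}"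
  defines "I \<equiv> {k\<in>K. norm (s k) < delta k}"
  defines "B \<equiv> {k\<in>K. norm (s k) = delta k}"
  assumes eps: "eps_g > 0" "eps_H > 0"
    and params: "0 < gamma1" "gamma1 < 1" "1 \<le> gamma2" "1 / gamma2 < psi" "psi \<le> 1"
    and delta_init: "delta 0 = delta0" "delta0 > 0" "delta_max \<ge> delta0"
    and eta: "0 < eta" "eta < 1"
    \<comment> \<open>s_k is a global solution of the regularized trust-region subproblem\<close>
    and step_feas: "\<And>k. k \<in> K \<Longrightarrow> norm (s k) \<le> delta k"
    and step_opt: "\<And>k t. k \<in> K \<Longrightarrow> norm t \<le> delta k \<Longrightarrow>
        tr_model f g H (x k) (x k + s k) + 1/2 * eps_H * (norm (s k))\<^sup>2
          \<le> tr_model f g H (x k) (x k + t) + 1/2 * eps_H * (norm t)\<^sup>2"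
    \<comment> \<open>update rules\<close>
    and upd_succ: "\<And>k. k \<in> K \<Longrightarrow> tr_rho f g H (x k) (s k) \<ge> eta \<Longrightarrow>
        x (Suc k) = x k + s k \<and>
        delta (Suc k) = (if norm (s k) \<ge> psi * delta k then min (gamma2 * delta k) delta_max
                         else delta k)"
    and upd_fail: "\<And>k. k \<in> K \<Longrightarrow> tr_rho f g H (x k) (s k) < eta \<Longrightarrow>
        x (Suc k) = x k \<and> delta (Suc k) = gamma1 * norm (s k)"
    \<comment> \<open>standing assumption\<close>
    and bdd_below: "\<And>k. (\<forall>j<k. j \<in> K) \<Longrightarrow> f (x k) \<ge> f_low"
    and U_open: "open U"
    and segs: "\<And>k. k \<in> K \<Longrightarrow> closed_segment (x k) (x k + s k) \<subseteq> U"
    and f_deriv: "\<And>y. y \<in> U \<Longrightarrow> (f has_derivative (\<lambda>h. g y \<bullet> h)) (at y)"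
    and g_deriv: "\<And>y. y \<in> U \<Longrightarrow> (g has_derivative (\<lambda>h. H y *v h)) (at y)"
    and H_cont: "continuous_on U H"
    and L_pos: "L_g > 0" "L_H > 0"
    and g_lip: "\<And>y z. y \<in> U \<Longrightarrow> z \<in> U \<Longrightarrow> norm (g y - g z) \<le> L_g * norm (y - z)"
    and H_lip: "\<And>y z. y \<in> U \<Longrightarrow> z \<in> U \<Longrightarrow>
        onorm (\<lambda>v. (H y - H z) *v v) \<le> L_H * norm (y - z)"
  shows "(k \<in> B \<inter> S \<longrightarrow> f (x k) - f (x (Suc k)) \<ge> eta / 2 * eps_H * (delta k)\<^sup>2)
       \<and> (k \<in> I \<inter> S \<longrightarrow> f (x k) - f (x (Suc k)) \<ge>
            eta / (2 * (1 + 2 * L_H)) * min ((norm (g (x (Suc k))))\<^sup>2 / eps_H) (eps_H ^ 3))"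
  proof -
  have Lnn: "L_H \<ge> 0" using L_pos by simp
  have mdef: "\<And>t. tr_model f g H (x k) (x k + t) = f (x k) + g (x k) \<bullet> t + 1/2 * (t \<bullet> (H (x k) *v t))"
    by (simp add: tr_model_def)
  have m0: "tr_model f g H (x k) (x k) = f (x k)" by (simp add: tr_model_def)
  have main: "f (x k) - f (x (Suc k)) \<ge> eta * (1/2 * eps_H * (norm (s k))\<^sup>2)" if kS: "k \<in> S"
  proof -
    have kK: "k \<in> K" and rho: "tr_rho f g H (x k) (s k) \<ge> eta" using kS by (auto simp: S_def)
    have xs: "x (Suc k) = x k + s k" using upd_succ[OF kK rho] by simp
    define den where "den = tr_model f g H (x k) (x k) - tr_model f g H (x k) (x k + s k)"
    have "norm (0::real^'n) \<le> delta k" using order_trans[OF norm_ge_zero step_feas[OF kK]] by simp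
    from step_opt[OF kK this] have den_ge: "den \<ge> 1/2 * eps_H * (norm (s k))\<^sup>2"
      by (simp add: den_def m0)
    have "den \<noteq> 0"
    proof
      assume "den = 0"
      then have "tr_rho f g H (x k) (s k) = 0" by (simp add: tr_rho_def den_def)
      then show False using rho eta by simp
    qed
    moreover have "0 \<le> 1/2 * eps_H * (norm (s k))\<^sup>2" using eps(2) by simp
    then have "den \<ge> 0" using den_ge by linarith
    ultimately have dpos: "den > 0" by simp
    have "eta \<le> (f (x k) - f (x k + s k)) / den" using rho by (simp add: tr_rho_def den_def)
    then have "eta * den \<le> f (x k) - f (x k + s k)" using dpos by (simp add: le_divide_eq)
    moreover have "eta * (1/2 * eps_H * (norm (s k))\<^sup>2) \<le> eta * den"
      using den_ge eta by (intro mult_left_mono) auto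
    ultimately show ?thesis using xs by simp
  qed
  show ?thesis
  proof (intro conjI impI)
    assume "k \<in> B \<inter> S"
    then have "norm (s k) = delta k" "k \<in> S" by (auto simp: B_def)
    with main show "f (x k) - f (x (Suc k)) \<ge> eta / 2 * eps_H * (delta k)\<^sup>2" by simp
  next
    assume kIS: "k \<in> I \<inter> S"
    then have kS: "k \<in> S" and kK: "k \<in> K" and sd: "norm (s k) < delta k"
      by (auto simp: I_def)
    have rho: "tr_rho f g H (x k) (s k) \<ge> eta" using kS by (auto simp: S_def)
    have xs: "x (Suc k) = x k + s k" using upd_succ[OF kK rho] by simp
    have seg: "closed_segment (x k) (x k + s k) \<subseteq> U" using segs[OF kK] .
    have xU: "x k \<in> U" using seg by auto
    have sym: "\<And>u v. u \<bullet> (H (x k) *v v) = v \<bullet> (H (x k) *v u)"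
      by (rule hess_sym[OF U_open xU f_deriv g_deriv H_lip Lnn])
    have st: "g (x k) + H (x k) *v s k + eps_H *\<^sub>R s k = 0"
    proof (rule stationary[OF sym sd])
      fix t :: "real^'n" assume "norm t \<le> delta k"
      from step_opt[OF kK this] show "g (x k) \<bullet> s k + 1 / 2 * (s k \<bullet> (H (x k) *v s k)) + 1 / 2 * eps_H * (norm (s k))\<^sup>2
         \<le> g (x k) \<bullet> t + 1 / 2 * (t \<bullet> (H (x k) *v t)) + 1 / 2 * eps_H * (norm t)\<^sup>2"
        unfolding mdef by simp
    qed
    have tay: "norm (g (x k + s k) - g (x k) - H (x k) *v s k) \<le> L_H * (norm (s k))\<^sup>2"
      using taylor_g[OF seg g_deriv H_lip Lnn] by simp
    have e: "g (x k + s k) - g (x k) - H (x k) *v s k = g (x k + s k) + eps_H *\<^sub>R s k"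
    proof -
      have "g (x k) = - (H (x k) *v s k + eps_H *\<^sub>R s k)"
        by (simp only: eq_neg_iff_add_eq_0 add.assoc[symmetric] st)
      then show ?thesis by simp
    qed
    have "norm (g (x k + s k) + eps_H *\<^sub>R s k) \<le> L_H * (norm (s k))\<^sup>2" using tay unfolding e .
    moreover have "norm (g (x k + s k)) \<le> norm (g (x k + s k) + eps_H *\<^sub>R s k) + norm (eps_H *\<^sub>R s k)"
      using norm_triangle_ineq4[of "g (x k + s k) + eps_H *\<^sub>R s k" "eps_H *\<^sub>R s k"] by simp
    ultimately have Gb: "norm (g (x (Suc k))) \<le> L_H * (norm (s k))\<^sup>2 + eps_H * norm (s k)"
      using eps xs by simp
    have fi: "min ((norm (g (x (Suc k))))\<^sup>2 / eps_H) (eps_H ^ 3) \<le> (1 + 2 * L_H) * eps_H * (norm (s k))\<^sup>2"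
      by (rule final_ineq[OF eps(2) L_pos(2) norm_ge_zero norm_ge_zero Gb])
    have cpos: "eta / (2 * (1 + 2 * L_H)) \<ge> 0" using eta L_pos by simp
    have "eta / (2 * (1 + 2 * L_H)) * min ((norm (g (x (Suc k))))\<^sup>2 / eps_H) (eps_H ^ 3)
        \<le> eta / (2 * (1 + 2 * L_H)) * ((1 + 2 * L_H) * eps_H * (norm (s k))\<^sup>2)"
      using fi cpos by (rule mult_left_mono)
    also have "\<dots> = eta * (1/2 * eps_H * (norm (s k))\<^sup>2)" proof -
      have "1 + 2 * L_H \<noteq> 0" using L_pos by simp
      then show ?thesis by (simp add: field_simps)
    qed
    also have "\<dots> \<le> f (x k) - f (x (Suc k))" using main[OF kS] .
    finally show "f (x k) - f (x (Suc k)) \<ge>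
            eta / (2 * (1 + 2 * L_H)) * min ((norm (g (x (Suc k))))\<^sup>2 / eps_H) (eps_H ^ 3)" .
  qed
qed

end
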